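(* Let $N\ge1$, let $G$ be a group, and let $\mathbf r:G\to \mathrm U(N)$ be a unitary representation of $G$ acting on the $N$ Higgs doublets $\Phi_1,\dots,\Phi_N$ by $\Phi_i\mapsto \mathbf r(g)_{ij}\Phi_j$. Consider the general $N$-Higgs-doublet potential $V_H=\mu_{ij}(\Phi_i^\dagger\Phi_j)+z_{ij,kl}(\Phi_i^\dagger\Phi_j)(\Phi_k^\dagger\Phi_l)$ with coefficients satisfying $\mu_{ij}=\overline{\mu_{ji}}$ and $z_{ij,kl}=z_{kl,ij}=\overline{z_{ji,lk}}$. Then the number of independent (real) parameters of those potentials $V_H$ that are invariant under the action of $G$ (i.e. the real dimension of the subspace of coefficient pairs $(\mu,z)$ fixed by the induced action of $G$) equals the multiplicity of the trivial representation $\mathbf 1$ (the number of singlets) in the representation $$(\bar{\mathbf r}\otimes\mathbf r)\ \oplus\ \big[\mathrm{Sym}^2(\mathbf r)\otimes\mathrm{Sym}^2(\bar{\mathbf r})\big]\ \oplus\ \big[\mathrm{Alt}^2(\mathbf r)\otimes\mathrm{Alt}^2(\bar{\mathbf r})\big],$$ where the first summand is the contribution of $\mu_{ij}$ and the remaining two are the contribution of $z_{ij,kl}$.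
   Context: $\bar{\mathbf r}$ denotes the complex conjugate representation of $\mathbf r$; $\mathrm{Sym}^2(\mathbf r)$ and $\mathrm{Alt}^2(\mathbf r)$ denote the symmetric and antisymmetric parts of $\mathbf r\otimes\mathbf r$, so that $\mathbf r\otimes\mathbf r=\mathrm{Sym}^2(\mathbf r)\oplus\mathrm{Alt}^2(\mathbf r)$. All representations involved are unitary and hence decompose as direct sums of irreducible representations; the multiplicity of the trivial one-dimensional representation $\mathbf 1$ is the number of singlets. *)

theory Defs
  imports "HOL-Analysis.Analysis" "HOL-Algebra.Group"
begin

(* Matrices acting on C^I, I a finite index type.  A representation of the group G
   on a subspace W of C^I is a map rho : G -> complex^'i^'i leaving W invariant. *)

definition unitary_mat :: "complex^'n^'n \<Rightarrow> bool" where
  "unitary_mat U \<longleftrightarrow> (\<chi> i j. cnj (U $ j $ i)) ** U = mat 1"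

definition conj_rep :: "('g \<Rightarrow> complex^'n^'n) \<Rightarrow> 'g \<Rightarrow> complex^'n^'n" where
  "conj_rep r g = (\<chi> i j. cnj (r g $ i $ j))"

definition tensor_rep :: "('g \<Rightarrow> complex^'i^'i) \<Rightarrow> ('g \<Rightarrow> complex^'j^'j) \<Rightarrow>
    'g \<Rightarrow> complex^('i \<times> 'j)^('i \<times> 'j)" where
  "tensor_rep r1 r2 g = (\<chi> p q. r1 g $ fst p $ fst q * r2 g $ snd p $ snd q)"

definition tensor_space :: "(complex^'i) set \<Rightarrow> (complex^'j) set \<Rightarrow> (complex^('i \<times> 'j)) set" where
  "tensor_space W1 W2 = vec.span {(\<chi> p. v $ fst p * w $ snd p) | v w. v \<in> W1 \<and> w \<in> W2}"

definition dsum_rep :: "('g \<Rightarrow> complex^'i^'i) \<Rightarrow> ('g \<Rightarrow> complex^'j^'j) \<Rightarrow>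
    'g \<Rightarrow> complex^('i + 'j)^('i + 'j)" where
  "dsum_rep r1 r2 g = (\<chi> a b. case (a, b) of
      (Inl i, Inl j) \<Rightarrow> r1 g $ i $ j
    | (Inr i, Inr j) \<Rightarrow> r2 g $ i $ j
    | _ \<Rightarrow> 0)"

definition dsum_space :: "(complex^'i) set \<Rightarrow> (complex^'j) set \<Rightarrow> (complex^('i + 'j)) set" where
  "dsum_space W1 W2 = {v. (\<chi> i. v $ Inl i) \<in> W1 \<and> (\<chi> j. v $ Inr j) \<in> W2}"

(* Sym^2 and Alt^2 of C^n as subspaces of C^n \<otimes> C^n = C^(n x n);
   Sym^2(r) is r \<otimes> r restricted to sym_space, Alt^2(r) is r \<otimes> r restricted to alt_space *)
definition sym_space :: "(complex^('n::finite \<times> 'n)) set" where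
  "sym_space = {v. \<forall>i j. v $ (i, j) = v $ (j, i)}"

definition alt_space :: "(complex^('n::finite \<times> 'n)) set" where
  "alt_space = {v. \<forall>i j. v $ (i, j) = - v $ (j, i)}"

(* number of singlets (multiplicity of the trivial representation) of the
   representation rho of G on W: complex dimension of the G-invariant vectors in W *)
definition num_singlets :: "('g, 'b) monoid_scheme \<Rightarrow> ('g \<Rightarrow> complex^'i^'i) \<Rightarrow> (complex^'i) set \<Rightarrow> nat" where
  "num_singlets G rho W = vec.dim {v \<in> W. \<forall>g \<in> carrier G. rho g *v v = v}"

(* The NHDM potential V_H = mu_ij (Phi_i^+ Phi_j) + z_{ij,kl} (Phi_i^+ Phi_j)(Phi_k^+ Phi_l).
   mu is indexed by (i,j), z by ((i,j),(k,l)).  Substituting Phi_i \<mapsto> r_ij Phi_j gives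
   the induced action on the coefficients below. *)
definition herm_mu :: "complex^('n::finite \<times> 'n) \<Rightarrow> bool" where
  "herm_mu \<mu> \<longleftrightarrow> (\<forall>i j. \<mu> $ (i, j) = cnj (\<mu> $ (j, i)))"

definition herm_z :: "complex^(('n::finite \<times> 'n) \<times> ('n \<times> 'n)) \<Rightarrow> bool" where
  "herm_z z \<longleftrightarrow> (\<forall>i j k l. z $ ((i, j), (k, l)) = z $ ((k, l), (i, j))
                        \<and> z $ ((i, j), (k, l)) = cnj (z $ ((j, i), (l, k))))"

definition act_mu :: "complex^'n::finite^'n \<Rightarrow> complex^('n \<times> 'n) \<Rightarrow> complex^('n \<times> 'n)" where
  "act_mu U \<mu> = (\<chi> p. \<Sum>i\<in>UNIV. \<Sum>j\<in>UNIV. cnj (U $ i $ fst p) * \<mu> $ (i, j) * U $ j $ snd p)"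

definition act_z :: "complex^'n::finite^'n \<Rightarrow> complex^(('n \<times> 'n) \<times> ('n \<times> 'n)) \<Rightarrow> complex^(('n \<times> 'n) \<times> ('n \<times> 'n))" where
  "act_z U z = (\<chi> q. \<Sum>i\<in>UNIV. \<Sum>j\<in>UNIV. \<Sum>k\<in>UNIV. \<Sum>l\<in>UNIV.
       cnj (U $ i $ fst (fst q)) * U $ j $ snd (fst q) * cnj (U $ k $ fst (snd q)) * U $ l $ snd (snd q) * z $ ((i, j), (k, l)))"

definition invariant_potentials ::
  "('g, 'b) monoid_scheme \<Rightarrow> ('g \<Rightarrow> complex^'n::finite^'n) \<Rightarrow>
   ((complex^('n \<times> 'n)) \<times> (complex^(('n \<times> 'n) \<times> ('n \<times> 'n)))) set" where
  "invariant_potentials G r = {(\<mu>, z). herm_mu \<mu> \<and> herm_z z \<and>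
      (\<forall>g \<in> carrier G. act_mu (r g) \<mu> = \<mu> \<and> act_z (r g) z = z)}"

end

theory Submission
  imports Defs
begin


lemma scaleR_vec_cx: "(c::real) *\<^sub>R (x::complex^'i) = complex_of_real c *s x"
  unfolding vec_eq_iff by (intro allI, subst vector_scaleR_component) (simp add: scaleR_conv_of_real)

lemma vec_subspace_real: "vec.subspace (T::(complex^'i) set) \<Longrightarrow> subspace T"
  unfolding subspace_def vec.subspace_def by (simp add: scaleR_vec_cx)

lemma re_eq: "complex_of_real (Re z) = (z + cnj z) / 2"
  by (simp add: complex_eq_iff)
lemma im_eq: "complex_of_real (Im z) = (- \<i> / 2) * (z - cnj z)"
  by (simp add: complex_eq_iff)

lemma real_form_dim:
  fixes S :: "(complex^'i) set" and sg :: "complex^'i \<Rightarrow> complex^'i"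
  assumes S: "vec.subspace S"
    and sgS: "\<And>x. x \<in> S \<Longrightarrow> sg x \<in> S"
    and inv: "\<And>x. sg (sg x) = x"
    and add: "\<And>x y. sg (x + y) = sg x + sg y"
    and scl: "\<And>c x. sg (c *s x) = cnj c *s sg x"
  shows "dim {x\<in>S. sg x = x} = vec.dim S"
proof -
  define H where "H = {x\<in>S. sg x = x}"
  have sg0: "sg 0 = 0" using scl[of 0 0] by simp
  have sgsum: "sg (\<Sum>v\<in>t. f v) = (\<Sum>v\<in>t. sg (f v))" if "finite t" for t and f :: "complex^'i \<Rightarrow> complex^'i"
    using that by (induction t rule: finite_induct) (auto simp: sg0 add)
  have subH: "subspace H"
    unfolding subspace_def H_def
    using S sg0 add scl
    by (auto simp: vec.subspace_def scaleR_vec_cx)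
  obtain B where B: "B \<subseteq> H" "independent B" "H \<subseteq> span B" "card B = dim H"
    using basis_exists by blast
  have finB: "finite B" using B(2) independent_bound by blast
  have spanB: "span B \<subseteq> vec.span B"
    by (rule span_minimal) (auto intro: vec.span_base vec_subspace_real vec.subspace_span)
  have BS: "B \<subseteq> S" using B(1) unfolding H_def by auto
  have sgB: "\<And>v. v \<in> B \<Longrightarrow> sg v = v" using B(1) unfolding H_def by auto
  have "S \<subseteq> vec.span B"
  proof
    fix x assume xS: "x \<in> S"
    define h1 where "h1 = (1/2) *s (x + sg x)"
    define h2 where "h2 = (- \<i>/2) *s (x + (-1) *s sg x)"
    have Sc: "\<And>a b. a \<in> S \<Longrightarrow> b \<in> S \<Longrightarrow> c *s (a + d *s b) \<in> S" for c d
      using S by (simp add: vec.subspace_def)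
    have e1: "sg h1 = cnj (1/2) *s (sg x + sg (sg x))" unfolding h1_def by (simp only: scl add)
    have e2: "sg h2 = cnj (- \<i>/2) *s (sg x + cnj (-1) *s sg (sg x))" unfolding h2_def by (simp only: scl add)
    have "h2 \<in> S" unfolding h2_def by (rule Sc) (use xS sgS in auto)
    have "h1 \<in> S" unfolding h1_def using Sc[of x "sg x" "1/2" 1] xS sgS by simp
    have "sg h1 = h1" "sg h2 = h2" unfolding e1 e2 unfolding h1_def h2_def inv
      by (simp_all add: vec_eq_iff algebra_simps)
    then have "h1 \<in> H" "h2 \<in> H" using \<open>h1 \<in> S\<close> \<open>h2 \<in> S\<close> unfolding H_def by auto
    have x: "x = h1 + \<i> *s h2" unfolding h1_def h2_def
      by (simp add: vec_eq_iff algebra_simps)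
    have "h1 \<in> vec.span B" "h2 \<in> vec.span B"
      using \<open>h1 \<in> H\<close> \<open>h2 \<in> H\<close> B(3) spanB by auto
    then show "x \<in> vec.span B" by (subst x) (auto intro: vec.span_add vec.span_scale)
  qed
  moreover have "vec.independent B"
    unfolding vec.independent_explicit_module
  proof (intro allI impI)
    fix t u v assume t: "finite t" "t \<subseteq> B" and s0: "(\<Sum>v\<in>t. u v *s v) = 0" and vt: "v \<in> t"
    have "sg (\<Sum>v\<in>t. u v *s v) = 0" using s0 sg0 by simp
    then have s1: "(\<Sum>v\<in>t. cnj (u v) *s v) = 0"
      using t sgB by (simp add: sgsum scl subset_eq)
    have re: "(\<Sum>v\<in>t. Re (u v) *\<^sub>R v) = 0"
    proof -
      have "(\<Sum>v\<in>t. Re (u v) *\<^sub>R v) = (1/2) *s ((\<Sum>v\<in>t. u v *s v) + (\<Sum>v\<in>t. cnj (u v) *s v))"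
        by (simp add: vec_eq_iff sum_component scaleR_vec_cx sum_distrib_left
            sum.distrib[symmetric] re_eq) (auto intro!: sum.cong simp: field_simps)
      then show ?thesis using s0 s1 by simp
    qed
    have im: "(\<Sum>v\<in>t. Im (u v) *\<^sub>R v) = 0"
    proof -
      have c: "(\<Sum>v\<in>t. complex_of_real (Im (u v)) * v $ i) = \<i> * (\<Sum>v\<in>t. cnj (u v) * v $ i) / 2 - \<i> * (\<Sum>v\<in>t. u v * v $ i) / 2" for i
      proof -
        have "(\<Sum>v\<in>t. complex_of_real (Im (u v)) * v $ i) = (\<Sum>v\<in>t. \<i>/2 * (cnj (u v) * v $ i) - \<i>/2 * (u v * v $ i))"
          by (rule sum.cong) (simp_all add: im_eq algebra_simps)
        also have "\<dots> = \<i>/2 * (\<Sum>v\<in>t. cnj (u v) * v $ i) - \<i>/2 * (\<Sum>v\<in>t. u v * v $ i)"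
          by (simp add: sum_subtractf sum_distrib_left)
        finally show ?thesis by simp
      qed
      have "(\<Sum>v\<in>t. Im (u v) *\<^sub>R v) = (- \<i>/2) *s ((\<Sum>v\<in>t. u v *s v) - (\<Sum>v\<in>t. cnj (u v) *s v))"
        unfolding vec_eq_iff by (simp add: sum_component scaleR_vec_cx c)
      then show ?thesis using s0 s1 by simp
    qed
    have ind: "\<And>t u v. finite t \<Longrightarrow> t \<subseteq> B \<Longrightarrow> (\<Sum>v\<in>t. u v *\<^sub>R v) = 0 \<Longrightarrow> v \<in> t \<Longrightarrow> u v = 0"
      using B(2) unfolding independent_explicit_module by blast
    have "Re (u v) = 0" by (rule ind[OF t re vt])
    moreover have "Im (u v) = 0" by (rule ind[OF t im vt])
    ultimately show "u v = 0" by (simp add: complex_eq_iff)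
  qed
  ultimately have "card B = vec.dim S" using BS vec.basis_card_eq_dim by blast
  then show ?thesis using B(4) H_def by simp
qed



lemma sum_UNIV_pair: "(\<Sum>q\<in>UNIV. F q) = (\<Sum>x\<in>UNIV. \<Sum>y\<in>UNIV. F (x,y))"
  by (subst sum.cartesian_product) (simp add: UNIV_Times_UNIV[symmetric] del: UNIV_Times_UNIV)

lemma d1: "(\<Sum>x\<in>(UNIV::'a::finite set). \<Sum>y\<in>(UNIV::'b::finite set). (f x y::complex) * (if x = a then 1 else 0) * (if y = b then 1 else 0)) = f a b"
proof -
  have e: "\<And>x y. f x y * (if x = a then 1 else 0) * (if y = b then 1 else 0) = (if y = b then (if x = a then f x y else 0) else 0)" by simp
  show ?thesis unfolding e by (simp add: sum.delta)
qed

lemma delta2: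
  fixes f :: "'a::finite \<Rightarrow> 'b::finite \<Rightarrow> complex"
  shows "(\<Sum>x\<in>UNIV. \<Sum>y\<in>UNIV. f x y * ((if x = a then 1 else 0) + e * (if x = a' then 1 else 0))
      * ((if y = b then 1 else 0) + e * (if y = b' then 1 else 0)))
    = f a b + e * f a b' + e * f a' b + e * e * f a' b'"
proof -
  have "(\<Sum>x\<in>UNIV. \<Sum>y\<in>UNIV. f x y * ((if x = a then 1 else 0) + e * (if x = a' then 1 else 0))
      * ((if y = b then 1 else 0) + e * (if y = b' then 1 else 0))) =
     (\<Sum>x\<in>UNIV. \<Sum>y\<in>UNIV. f x y * (if x = a then 1 else 0) * (if y = b then 1 else 0))
     + e * (\<Sum>x\<in>UNIV. \<Sum>y\<in>UNIV. f x y * (if x = a then 1 else 0) * (if y = b' then 1 else 0))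
     + e * (\<Sum>x\<in>UNIV. \<Sum>y\<in>UNIV. f x y * (if x = a' then 1 else 0) * (if y = b then 1 else 0))
     + e * e * (\<Sum>x\<in>UNIV. \<Sum>y\<in>UNIV. f x y * (if x = a' then 1 else 0) * (if y = b' then 1 else 0))"
    by (simp only: sum_distrib_left sum.distrib[symmetric]) (rule sum.cong, simp, rule sum.cong, simp, simp add: algebra_simps)
  then show ?thesis by (simp only: d1)
qed

definition E1 :: "complex \<Rightarrow> (complex^('n::finite \<times> 'n)) set" where
  "E1 e = {v. \<forall>i j. v$(i,j) = e * v$(j,i)}"

definition EE :: "complex \<Rightarrow> (complex^(('n::finite \<times> 'n) \<times> ('n \<times> 'n))) set" where
  "EE e = {w. \<forall>a b c d. w$((a,b),(c,d)) = e * w$((b,a),(c,d)) \<and> w$((a,b),(c,d)) = e * w$((a,b),(d,c))}"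

lemma sym_E1: "sym_space = E1 1" by (simp add: sym_space_def E1_def)
lemma alt_E1: "alt_space = E1 (-1)" by (simp add: alt_space_def E1_def)

lemma EE_subspace: "vec.subspace (EE e :: (complex^(('n::finite \<times> 'n) \<times> ('n \<times> 'n))) set)"
  unfolding vec.subspace_def
proof (intro conjI ballI allI)
  show "0 \<in> EE e" unfolding EE_def by simp
next
  fix x y :: "complex^(('n \<times> 'n) \<times> ('n \<times> 'n))" assume x: "x \<in> EE e" and y: "y \<in> EE e"
  show "x + y \<in> EE e" unfolding EE_def
  proof (intro CollectI allI)
    fix a b c d
    have "x$((a,b),(c,d)) = e * x$((b,a),(c,d))" "x$((a,b),(c,d)) = e * x$((a,b),(d,c))"
         "y$((a,b),(c,d)) = e * y$((b,a),(c,d))" "y$((a,b),(c,d)) = e * y$((a,b),(d,c))"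
      using x y unfolding EE_def by blast+
    then show "(x + y)$((a,b),(c,d)) = e * (x + y)$((b,a),(c,d)) \<and> (x + y)$((a,b),(c,d)) = e * (x + y)$((a,b),(d,c))"
      by (simp only: vector_add_component distrib_left)
  qed
next
  fix c :: complex and x :: "complex^(('n \<times> 'n) \<times> ('n \<times> 'n))" assume x: "x \<in> EE e"
  show "c *s x \<in> EE e" unfolding EE_def
  proof (intro CollectI allI)
    fix a b cc d
    have "x$((a,b),(cc,d)) = e * x$((b,a),(cc,d))" "x$((a,b),(cc,d)) = e * x$((a,b),(d,cc))"
      using x unfolding EE_def by blast+
    then show "(c *s x)$((a,b),(cc,d)) = e * (c *s x)$((b,a),(cc,d)) \<and> (c *s x)$((a,b),(cc,d)) = e * (c *s x)$((a,b),(d,cc))"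
      unfolding vector_smult_component by (metis mult.left_commute)
  qed
qed

lemma tensor_space_E:
  assumes e2: "e * e = 1"
  shows "tensor_space (E1 e) (E1 e :: (complex^('n::finite \<times> 'n)) set) = EE e"
proof (rule equalityI)
  show "tensor_space (E1 e) (E1 e :: (complex^('n \<times> 'n)) set) \<subseteq> EE e"
    unfolding tensor_space_def
  proof (rule vec.span_minimal[OF _ EE_subspace])
    show "{\<chi> p. v $ fst p * w $ snd p |v w. v \<in> (E1 e :: (complex^('n \<times> 'n)) set) \<and> w \<in> (E1 e :: (complex^('n \<times> 'n)) set)} \<subseteq> EE e"
    proof safe
      fix v w :: "complex^('n \<times> 'n)" assume v: "v \<in> E1 e" and w: "w \<in> E1 e"
      have v': "\<And>i j. v$(i,j) = e * v$(j,i)" and w': "\<And>i j. w$(i,j) = e * w$(j,i)"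
        using v w unfolding E1_def by blast+
      show "(\<chi> p. v $ fst p * w $ snd p) \<in> EE e"
        unfolding EE_def
      proof (intro CollectI allI conjI)
        fix a b c d
        show "(\<chi> p. v $ fst p * w $ snd p) $ ((a,b),(c,d)) = e * (\<chi> p. v $ fst p * w $ snd p) $ ((b,a),(c,d))"
          by (simp only: vec_lambda_beta fst_conv snd_conv) (subst v', simp only: mult.assoc)
        show "(\<chi> p. v $ fst p * w $ snd p) $ ((a,b),(c,d)) = e * (\<chi> p. v $ fst p * w $ snd p) $ ((a,b),(d,c))"
          by (simp only: vec_lambda_beta fst_conv snd_conv) (subst w', simp only: mult.left_commute)
      qed
    qed
  qed
next
  show "EE e \<subseteq> tensor_space (E1 e) (E1 e :: (complex^('n \<times> 'n)) set)"
  proof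
    fix w :: "complex^(('n \<times> 'n) \<times> ('n \<times> 'n))" assume w: "w \<in> EE e"
    define ev :: "'n \<times> 'n \<Rightarrow> complex^('n \<times> 'n)" where
      "ev x = (\<chi> p. (if x = p then 1 else 0) + e * (if x = prod.swap p then 1 else 0))" for x
    have evE: "ev x \<in> E1 e" for x
      unfolding E1_def ev_def using e2 by (auto simp: algebra_simps)
    have ev_comp: "ev x $ p' = (if x = p' then 1 else 0) + e * (if x = prod.swap p' then 1 else 0)" for x p'
      by (simp add: ev_def)
    define T where "T q = (\<chi> p. ev (fst q) $ fst p * ev (snd q) $ snd p)" for q :: "('n \<times> 'n) \<times> ('n \<times> 'n)"
    have Tin: "T q \<in> tensor_space (E1 e) (E1 e)" for q
      unfolding tensor_space_def T_def
      apply (rule vec.span_base)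
      apply (rule CollectI)
      apply (rule exI[where x="ev (fst q)"])
      apply (rule exI[where x="ev (snd q)"])
      using evE by simp
    have "w = (\<Sum>q\<in>UNIV. (w$q/4) *s T q)"
    proof -
      have "w $ p = (\<Sum>q\<in>UNIV. (w$q/4) *s T q) $ p" for p
      proof -
        obtain a b c d where p: "p = ((a,b),(c,d))" by (metis prod.exhaust)
        have "(\<Sum>q\<in>UNIV. (w$q/4) *s T q) $ p = (\<Sum>q\<in>UNIV. (w$q/4) * (ev (fst q) $ fst p * ev (snd q) $ snd p))"
          by (simp add: sum_component T_def)
        also have "\<dots> = (\<Sum>x\<in>UNIV. \<Sum>y\<in>UNIV. (w$(x,y)/4) * ((if x = fst p then 1 else 0) + e * (if x = prod.swap (fst p) then 1 else 0))
           * ((if y = snd p then 1 else 0) + e * (if y = prod.swap (snd p) then 1 else 0)))"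
          by (rule trans[OF sum_UNIV_pair], simp only: ev_comp mult.assoc fst_conv snd_conv)
        also have "\<dots> = w $ ((a,b),(c,d)) / 4 + e * (w $ ((a,b),(d,c)) / 4) + e * (w $ ((b,a),(c,d)) / 4) + e * e * (w $ ((b,a),(d,c)) / 4)"
          by (subst delta2) (simp add: p)
        also have "\<dots> = w $ p"
        proof -
          have f1: "w $ ((a,b),(c,d)) = e * w $ ((a,b),(d,c))" and f2: "w $ ((a,b),(c,d)) = e * w $ ((b,a),(c,d))"
            and f3: "w $ ((b,a),(c,d)) = e * w $ ((b,a),(d,c))"
            using w unfolding EE_def by blast+
          have h1: "e * (w $ ((a,b),(d,c)) / 4) = w $ ((a,b),(c,d)) / 4"
            by (simp only: times_divide_eq_right f1)
          have h2: "e * (w $ ((b,a),(c,d)) / 4) = w $ ((a,b),(c,d)) / 4"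
            by (simp only: times_divide_eq_right f2)
          have h3: "e * e * (w $ ((b,a),(d,c)) / 4) = w $ ((a,b),(c,d)) / 4"
            by (simp only: times_divide_eq_right f2 f3 mult.assoc)
          show ?thesis unfolding p h1 h2 h3 by simp
        qed
        finally show ?thesis by (rule sym)
      qed
      then show ?thesis unfolding vec_eq_iff by blast
    qed
    moreover have "(\<Sum>q\<in>UNIV. (w$q/4) *s T q) \<in> tensor_space (E1 e) (E1 e)"
      unfolding tensor_space_def
      by (rule vec.span_sum, rule vec.span_scale, rule Tin[unfolded tensor_space_def])
    ultimately show "w \<in> tensor_space (E1 e) (E1 e)" by metis
  qed
qed



definition adj :: "complex^'n::finite^'n \<Rightarrow> complex^'n^'n" where
  "adj U = (\<chi> i j. cnj (U $ j $ i))"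

definition Amat :: "complex^'n::finite^'n \<Rightarrow> complex^('n \<times> 'n)^('n \<times> 'n)" where
  "Amat U = (\<chi> p q. cnj (U $ fst p $ fst q) * U $ snd p $ snd q)"

definition Mmat :: "complex^'n::finite^'n \<Rightarrow> complex^(('n \<times> 'n) \<times> ('n \<times> 'n))^(('n \<times> 'n) \<times> ('n \<times> 'n))" where
  "Mmat U = (\<chi> q q'. (U $ fst (fst q) $ fst (fst q') * U $ snd (fst q) $ snd (fst q')) *
                      (cnj (U $ fst (snd q) $ fst (snd q')) * cnj (U $ snd (snd q) $ snd (snd q'))))"

definition T1 :: "complex^('n::finite \<times> 'n) \<Rightarrow> complex^('n \<times> 'n)" where
  "T1 m = (\<chi> p. m $ (snd p, fst p))"

definition perm4 :: "('n \<times> 'n) \<times> ('n \<times> 'n) \<Rightarrow> ('n \<times> 'n) \<times> ('n \<times> 'n)" where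
  "perm4 q = ((fst (fst q), fst (snd q)), (snd (fst q), snd (snd q)))"

definition T2 :: "complex^(('n::finite \<times> 'n) \<times> ('n \<times> 'n)) \<Rightarrow> complex^(('n \<times> 'n) \<times> ('n \<times> 'n))" where
  "T2 z = (\<chi> q. z $ perm4 q)"

definition swap1 :: "('n \<times> 'n) \<times> ('n \<times> 'n) \<Rightarrow> ('n \<times> 'n) \<times> ('n \<times> 'n)" where
  "swap1 q = (prod.swap (fst q), snd q)"

definition tau :: "complex^(('n::finite \<times> 'n) \<times> ('n \<times> 'n)) \<Rightarrow> complex^(('n \<times> 'n) \<times> ('n \<times> 'n))" where
  "tau w = (\<chi> q. w $ swap1 q)"

definition sig1 :: "complex^('n::finite \<times> 'n) \<Rightarrow> complex^('n \<times> 'n)" where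
  "sig1 v = (\<chi> p. cnj (v $ prod.swap p))"

definition sig2 :: "complex^(('n::finite \<times> 'n) \<times> ('n \<times> 'n)) \<Rightarrow> complex^(('n \<times> 'n) \<times> ('n \<times> 'n))" where
  "sig2 w = (\<chi> q. cnj (w $ prod.swap q))"

lemma sum_inv_reindex:
  assumes "\<And>x. h (h x) = x"
  shows "(\<Sum>x\<in>UNIV. F x) = (\<Sum>x\<in>UNIV. F (h x))"
  by (rule sum.reindex_bij_witness[where i=h and j=h]) (auto simp: assms)

lemma K1: "Amat U *v T1 m = T1 (act_mu (adj U) m)"
proof -
  have "(Amat U *v T1 m) $ p = T1 (act_mu (adj U) m) $ p" for p
  proof -
    have "(Amat U *v T1 m) $ p = (\<Sum>q\<in>UNIV. cnj (U $ fst p $ fst q) * U $ snd p $ snd q * m $ prod.swap q)"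
      by (simp add: matrix_vector_mult_def Amat_def T1_def prod.swap_def)
    also have "\<dots> = (\<Sum>q\<in>UNIV. cnj (U $ fst p $ snd q) * U $ snd p $ fst q * m $ q)"
      by (subst sum_inv_reindex[where h=prod.swap]) simp_all
    also have "\<dots> = T1 (act_mu (adj U) m) $ p"
      by (simp add: T1_def act_mu_def adj_def sum_UNIV_pair mult_ac)
    finally show ?thesis .
  qed
  then show ?thesis by (simp add: vec_eq_iff)
qed

lemma K2: "Mmat U *v T2 z = T2 (act_z (adj U) z)"
proof -
  have "(Mmat U *v T2 z) $ q = T2 (act_z (adj U) z) $ q" for q
  proof -
    have pp: "perm4 (perm4 x) = x" for x :: "('n \<times> 'n) \<times> ('n \<times> 'n)" by (simp add: perm4_def)
    have "(Mmat U *v T2 z) $ q = (\<Sum>q'\<in>UNIV. Mmat U $ q $ q' * z $ perm4 q')"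
      by (simp add: matrix_vector_mult_def T2_def)
    also have "\<dots> = (\<Sum>q'\<in>UNIV. Mmat U $ q $ perm4 q' * z $ q')"
      by (subst sum_inv_reindex[where h=perm4]) (simp_all add: pp)
    also have "\<dots> = T2 (act_z (adj U) z) $ q"
      by (simp add: T2_def act_z_def adj_def Mmat_def perm4_def sum_UNIV_pair mult_ac)
    finally show ?thesis .
  qed
  then show ?thesis by (simp add: vec_eq_iff)
qed

lemma K3: "Amat U *v sig1 v = sig1 (Amat U *v v)"
proof -
  have "(Amat U *v sig1 v) $ p = sig1 (Amat U *v v) $ p" for p
  proof -
    have "(Amat U *v sig1 v) $ p = (\<Sum>q\<in>UNIV. Amat U $ p $ q * cnj (v $ prod.swap q))"
      by (simp add: matrix_vector_mult_def sig1_def)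
    also have "\<dots> = (\<Sum>q\<in>UNIV. Amat U $ p $ prod.swap q * cnj (v $ q))"
      by (subst sum_inv_reindex[where h=prod.swap]) simp_all
    also have "\<dots> = sig1 (Amat U *v v) $ p"
      by (simp add: sig1_def matrix_vector_mult_def cnj_sum Amat_def mult_ac)
    finally show ?thesis .
  qed
  then show ?thesis by (simp add: vec_eq_iff)
qed

lemma K4: "Mmat U *v sig2 w = sig2 (Mmat U *v w)"
proof -
  have "(Mmat U *v sig2 w) $ p = sig2 (Mmat U *v w) $ p" for p
  proof -
    have "(Mmat U *v sig2 w) $ p = (\<Sum>q\<in>UNIV. Mmat U $ p $ q * cnj (w $ prod.swap q))"
      by (simp add: matrix_vector_mult_def sig2_def)
    also have "\<dots> = (\<Sum>q\<in>UNIV. Mmat U $ p $ prod.swap q * cnj (w $ q))"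
      by (subst sum_inv_reindex[where h=prod.swap]) simp_all
    also have "\<dots> = sig2 (Mmat U *v w) $ p"
      by (simp add: sig2_def matrix_vector_mult_def cnj_sum Mmat_def mult_ac)
    finally show ?thesis .
  qed
  then show ?thesis by (simp add: vec_eq_iff)
qed

lemma K5: "Mmat U *v tau w = tau (Mmat U *v w)"
proof -
  have "(Mmat U *v tau w) $ p = tau (Mmat U *v w) $ p" for p
  proof -
    have ss: "swap1 (swap1 x) = x" for x :: "('n \<times> 'n) \<times> ('n \<times> 'n)" by (simp add: swap1_def)
    have "(Mmat U *v tau w) $ p = (\<Sum>q\<in>UNIV. Mmat U $ p $ q * w $ swap1 q)"
      by (simp add: matrix_vector_mult_def tau_def)
    also have "\<dots> = (\<Sum>q\<in>UNIV. Mmat U $ p $ swap1 q * w $ q)"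
      by (subst sum_inv_reindex[where h=swap1]) (simp_all add: ss)
    also have "\<dots> = tau (Mmat U *v w) $ p"
      by (simp add: tau_def matrix_vector_mult_def Mmat_def swap1_def mult_ac)
    finally show ?thesis .
  qed
  then show ?thesis by (simp add: vec_eq_iff)
qed



lemma unitary_adj: "unitary_mat U \<longleftrightarrow> adj U ** U = mat 1"
  by (simp add: unitary_mat_def adj_def)

lemma adj_adj: "adj (adj U) = U"
  by (simp add: adj_def vec_eq_iff)

lemma inv_adj:
  assumes G: "group G" and unit: "\<And>g. g \<in> carrier G \<Longrightarrow> unitary_mat (r g)"
    and hom: "\<And>g h. g \<in> carrier G \<Longrightarrow> h \<in> carrier G \<Longrightarrow> r (g \<otimes>\<^bsub>G\<^esub> h) = r g ** r h"
    and g: "g \<in> carrier G"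
  shows "r (inv\<^bsub>G\<^esub> g) = adj (r g)"
proof -
  have o: "\<one>\<^bsub>G\<^esub> \<in> carrier G" using G by (simp add: group.is_monoid monoid.one_closed)
  have e: "r \<one>\<^bsub>G\<^esub> ** r \<one>\<^bsub>G\<^esub> = r \<one>\<^bsub>G\<^esub>" using hom[OF o o] o G by (simp add: group.is_monoid monoid.l_one)
  have u1: "adj (r \<one>\<^bsub>G\<^esub>) ** r \<one>\<^bsub>G\<^esub> = mat 1" using unit[OF o] by (simp add: unitary_adj)
  have one: "r \<one>\<^bsub>G\<^esub> = mat 1"
  proof -
    have "mat 1 = adj (r \<one>\<^bsub>G\<^esub>) ** (r \<one>\<^bsub>G\<^esub> ** r \<one>\<^bsub>G\<^esub>)" by (simp only: e u1)
    also have "\<dots> = r \<one>\<^bsub>G\<^esub>" by (simp only: matrix_mul_assoc u1 matrix_mul_lid)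
    finally show ?thesis by simp
  qed
  have ig: "inv\<^bsub>G\<^esub> g \<in> carrier G" using G g by (simp add: group.inv_closed)
  have ri: "r g ** r (inv\<^bsub>G\<^esub> g) = mat 1" using hom[OF g ig] g one G by (simp add: group.r_inv)
  have ug: "adj (r g) ** r g = mat 1" using unit[OF g] by (simp add: unitary_adj)
  have "adj (r g) = adj (r g) ** (r g ** r (inv\<^bsub>G\<^esub> g))" by (simp only: ri matrix_mul_rid)
  also have "\<dots> = r (inv\<^bsub>G\<^esub> g)" by (simp only: matrix_mul_assoc ug matrix_mul_lid)
  finally show ?thesis by simp
qed

lemma forall_adj:
  assumes G: "group G" and unit: "\<And>g. g \<in> carrier G \<Longrightarrow> unitary_mat (r g)"
    and hom: "\<And>g h. g \<in> carrier G \<Longrightarrow> h \<in> carrier G \<Longrightarrow> r (g \<otimes>\<^bsub>G\<^esub> h) = r g ** r h"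
  shows "(\<forall>g\<in>carrier G. P (r g)) \<longleftrightarrow> (\<forall>g\<in>carrier G. P (adj (r g)))"
proof
  assume h: "\<forall>g\<in>carrier G. P (r g)"
  show "\<forall>g\<in>carrier G. P (adj (r g))"
  proof
    fix g assume g: "g \<in> carrier G"
    have "inv\<^bsub>G\<^esub> g \<in> carrier G" using G g by (simp add: group.inv_closed)
    then show "P (adj (r g))" using h inv_adj[OF G unit hom g] by metis
  qed
next
  assume h: "\<forall>g\<in>carrier G. P (adj (r g))"
  show "\<forall>g\<in>carrier G. P (r g)"
  proof
    fix g assume g: "g \<in> carrier G"
    have ig: "inv\<^bsub>G\<^esub> g \<in> carrier G" using G g by (simp add: group.inv_closed)
    have "r g = adj (r (inv\<^bsub>G\<^esub> g))"
      using inv_adj[OF G unit hom ig] G g by (simp add: group.inv_inv)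
    then show "P (r g)" using h ig by metis
  qed
qed

lemma sum_UNIV_sum: "(\<Sum>x\<in>UNIV. (F :: 'a::finite + 'b::finite \<Rightarrow> 'c::comm_monoid_add) x) = (\<Sum>i\<in>UNIV. F (Inl i)) + (\<Sum>j\<in>UNIV. F (Inr j))"
  by (subst UNIV_Plus_UNIV[symmetric]) (simp add: sum.Plus del: UNIV_Plus_UNIV)

lemma forall_sum_type: "(\<forall>a. P a) \<longleftrightarrow> (\<forall>i. P (Inl i)) \<and> (\<forall>j. P (Inr j))"
  by (metis sumE)

lemma dsum_fix:
  "(dsum_rep r1 r2 g *v v = v) \<longleftrightarrow>
     (r1 g *v (\<chi> i. v $ Inl i) = (\<chi> i. v $ Inl i) \<and> r2 g *v (\<chi> j. v $ Inr j) = (\<chi> j. v $ Inr j))"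
proof -
  have l: "(dsum_rep r1 r2 g *v v) $ Inl i = (r1 g *v (\<chi> i. v $ Inl i)) $ i" for i
    by (simp add: matrix_vector_mult_def dsum_rep_def sum_UNIV_sum)
  have r: "(dsum_rep r1 r2 g *v v) $ Inr j = (r2 g *v (\<chi> j. v $ Inr j)) $ j" for j
    by (simp add: matrix_vector_mult_def dsum_rep_def sum_UNIV_sum)
  show ?thesis
    unfolding vec_eq_iff
    by (subst forall_sum_type) (simp add: l r)
qed

lemma smult_mv: "(A :: complex^'m^'k) *v (c *s x) = c *s (A *v x)"
  by (simp add: vec_eq_iff matrix_vector_mult_def sum_distrib_left mult_ac)

type_synonym 'n bigidx = "('n \<times> 'n) + ((('n \<times> 'n) \<times> ('n \<times> 'n)) + (('n \<times> 'n) \<times> ('n \<times> 'n)))"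

definition Lp :: "complex^('n::finite bigidx) \<Rightarrow> complex^('n \<times> 'n)" where
  "Lp v = (\<chi> p. v $ Inl p)"
definition Mp :: "complex^('n::finite bigidx) \<Rightarrow> complex^(('n \<times> 'n) \<times> ('n \<times> 'n))" where
  "Mp v = (\<chi> q. v $ Inr (Inl q))"
definition Rp :: "complex^('n::finite bigidx) \<Rightarrow> complex^(('n \<times> 'n) \<times> ('n \<times> 'n))" where
  "Rp v = (\<chi> q. v $ Inr (Inr q))"
definition emb :: "complex^('n::finite \<times> 'n) \<Rightarrow> complex^(('n \<times> 'n) \<times> ('n \<times> 'n)) \<Rightarrow> complex^(('n \<times> 'n) \<times> ('n \<times> 'n)) \<Rightarrow> complex^('n bigidx)" where
  "emb x y z = (\<chi> a. case a of Inl p \<Rightarrow> x $ p | Inr (Inl q) \<Rightarrow> y $ q | Inr (Inr q) \<Rightarrow> z $ q)"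

lemma emb_proj [simp]: "Lp (emb x y z) = x" "Mp (emb x y z) = y" "Rp (emb x y z) = z"
  by (simp_all add: Lp_def Mp_def Rp_def emb_def)

lemma emb_eta: "emb (Lp v) (Mp v) (Rp v) = v"
  unfolding vec_eq_iff emb_def Lp_def Mp_def Rp_def
  by (auto split: sum.split)

lemma proj_lin [simp]:
  "Lp (x + y) = Lp x + Lp y" "Mp (x + y) = Mp x + Mp y" "Rp (x + y) = Rp x + Rp y"
  "Lp (c *s x) = c *s Lp x" "Mp (c *s x) = c *s Mp x" "Rp (c *s x) = c *s Rp x"
  "Lp 0 = 0" "Mp 0 = 0" "Rp 0 = 0"
  by (simp_all add: Lp_def Mp_def Rp_def vec_eq_iff)

lemma rep_A: "tensor_rep (conj_rep r) r g = Amat (r g)"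
  by (simp add: tensor_rep_def conj_rep_def Amat_def)

lemma rep_M: "tensor_rep (tensor_rep r r) (tensor_rep (conj_rep r) (conj_rep r)) g = Mmat (r g)"
  by (simp add: tensor_rep_def conj_rep_def Mmat_def)

definition Sset :: "('g, 'b) monoid_scheme \<Rightarrow> ('g \<Rightarrow> complex^'n::finite^'n) \<Rightarrow> (complex^('n bigidx)) set" where
  "Sset G r = {v. Mp v \<in> EE 1 \<and> Rp v \<in> EE (-1) \<and>
     (\<forall>g\<in>carrier G. Amat (r g) *v Lp v = Lp v \<and> Mmat (r g) *v Mp v = Mp v \<and> Mmat (r g) *v Rp v = Rp v)}"

lemma S_char:
  fixes r :: "'g \<Rightarrow> complex^'n::finite^'n"
  shows "{v \<in> dsum_space UNIV
        (dsum_space (tensor_space sym_space sym_space) (tensor_space alt_space alt_space)).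
     \<forall>g\<in>carrier G. dsum_rep (tensor_rep (conj_rep r) r)
        (dsum_rep (tensor_rep (tensor_rep r r) (tensor_rep (conj_rep r) (conj_rep r)))
                  (tensor_rep (tensor_rep r r) (tensor_rep (conj_rep r) (conj_rep r)))) g *v v = v}
   = Sset G r"
proof -
  have ts: "tensor_space sym_space sym_space = (EE 1 :: (complex^(('n \<times> 'n) \<times> ('n \<times> 'n))) set)"
    "tensor_space alt_space alt_space = (EE (-1) :: (complex^(('n \<times> 'n) \<times> ('n \<times> 'n))) set)"
    by (simp_all add: sym_E1 alt_E1 tensor_space_E)
  show ?thesis
    unfolding ts Sset_def dsum_fix rep_A rep_M dsum_space_def
    by (simp add: Lp_def Mp_def Rp_def)
qed



definition PS :: "complex^(('n::finite \<times> 'n) \<times> ('n \<times> 'n)) \<Rightarrow> complex^(('n \<times> 'n) \<times> ('n \<times> 'n))" where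
  "PS w = (1/2) *s (w + tau w)"
definition PA :: "complex^(('n::finite \<times> 'n) \<times> ('n \<times> 'n)) \<Rightarrow> complex^(('n \<times> 'n) \<times> ('n \<times> 'n))" where
  "PA w = (1/2) *s (w - tau w)"
definition ws :: "complex^(('n::finite \<times> 'n) \<times> ('n \<times> 'n)) \<Rightarrow> bool" where
  "ws w \<longleftrightarrow> (\<forall>a b c d. w$((a,b),(c,d)) = w$((b,a),(d,c)))"

lemma PS_comp: "PS w $ ((a,b),(c,d)) = (w $ ((a,b),(c,d)) + w $ ((b,a),(c,d))) / 2"
  by (simp add: PS_def tau_def swap1_def)
lemma PA_comp: "PA w $ ((a,b),(c,d)) = (w $ ((a,b),(c,d)) - w $ ((b,a),(c,d))) / 2"
  by (simp add: PA_def tau_def swap1_def)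
lemma sig2_comp: "sig2 w $ ((a,b),(c,d)) = cnj (w $ ((c,d),(a,b)))"
  by (simp add: sig2_def)

lemma T1_T1: "T1 (T1 m) = m" by (simp add: T1_def vec_eq_iff)
lemma T2_T2: "T2 (T2 z) = z" by (simp add: T2_def perm4_def vec_eq_iff)
lemma sig1_sig1: "sig1 (sig1 m) = m" by (simp add: sig1_def vec_eq_iff)
lemma sig2_sig2: "sig2 (sig2 m) = m" by (simp add: sig2_def vec_eq_iff)
lemma PS_PA: "PS w + PA w = w" by (simp add: PS_def PA_def vec_eq_iff field_simps)

lemma lin_add:
  "T1 (x + y) = T1 x + T1 y" "T2 (z + z') = T2 z + T2 z'" "tau (z + z') = tau z + tau z'"
  "PS (z + z') = PS z + PS z'" "PA (z + z') = PA z + PA z'"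
  "sig1 (x + y) = sig1 x + sig1 y" "sig2 (z + z') = sig2 z + sig2 z'"
  by (simp_all add: T1_def T2_def tau_def PS_def PA_def sig1_def sig2_def vec_eq_iff field_simps)

lemma lin_smult:
  "T1 (c *s x) = c *s T1 x" "T2 (c *s z) = c *s T2 z" "tau (c *s z) = c *s tau z"
  "PS (c *s z) = c *s PS z" "PA (c *s z) = c *s PA z"
  "sig1 (c *s x) = cnj c *s sig1 x" "sig2 (c *s z) = cnj c *s sig2 z"
  by (simp_all add: T1_def T2_def tau_def PS_def PA_def sig1_def sig2_def vec_eq_iff field_simps)

lemma emb_add: "emb (x + x') (y + y') (z + z') = emb x y z + emb x' y' z'"
  by (simp add: emb_def vec_eq_iff split: sum.split)
lemma emb_smult: "emb (c *s x) (c *s y) (c *s z) = c *s emb x y z"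
  by (simp add: emb_def vec_eq_iff split: sum.split)

lemma herm_mu_iff: "herm_mu m \<longleftrightarrow> sig1 (T1 m) = T1 m"
proof -
  have c: "sig1 (T1 m) = T1 m \<longleftrightarrow> (\<forall>i j. cnj (m $ (i,j)) = m $ (j,i))"
    unfolding vec_eq_iff split_paired_All by (simp add: sig1_def T1_def)
  show ?thesis unfolding c herm_mu_def
  proof (intro iffI allI)
    fix i j assume H: "\<forall>i j. m $ (i, j) = cnj (m $ (j, i))"
    show "cnj (m $ (i,j)) = m $ (j,i)" using H[rule_format, of j i] by simp
  next
    fix i j assume H: "\<forall>i j. cnj (m $ (i,j)) = m $ (j,i)"
    show "m $ (i, j) = cnj (m $ (j, i))" using H[rule_format, of j i] by simp
  qed
qed

lemma herm_z_iff: "herm_z z \<longleftrightarrow> ws (T2 z) \<and> sig2 (T2 z) = T2 z"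
proof -
  have c1: "ws (T2 z) \<longleftrightarrow> (\<forall>a b c d. z $ ((a,c),(b,d)) = z $ ((b,d),(a,c)))"
    by (simp add: ws_def T2_def perm4_def)
  have c2: "sig2 (T2 z) = T2 z \<longleftrightarrow> (\<forall>a b c d. cnj (z $ ((c,a),(d,b))) = z $ ((a,c),(b,d)))"
    unfolding vec_eq_iff split_paired_All by (simp add: sig2_def T2_def perm4_def)
  show ?thesis unfolding c1 c2 herm_z_def
  proof (intro iffI conjI allI)
    fix a b c d
    assume H: "\<forall>i j k l. z $ ((i, j), k, l) = z $ ((k, l), i, j) \<and> z $ ((i, j), k, l) = cnj (z $ ((j, i), l, k))"
    show "z $ ((a,c),(b,d)) = z $ ((b,d),(a,c))" using H[rule_format, of a c b d] by simp
    show "cnj (z $ ((c,a),(d,b))) = z $ ((a,c),(b,d))" using H[rule_format, of a c b d] by (metis (no_types))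
  next
    fix i j k l
    assume H: "(\<forall>a b c d. z $ ((a,c),(b,d)) = z $ ((b,d),(a,c))) \<and> (\<forall>a b c d. cnj (z $ ((c,a),(d,b))) = z $ ((a,c),(b,d)))"
    show "z $ ((i, j), k, l) = z $ ((k, l), i, j)" using conjunct1[OF H, rule_format, where a=i and b=k and c=j and d=l] by simp
    show "z $ ((i, j), k, l) = cnj (z $ ((j, i), l, k))" using conjunct2[OF H, rule_format, where a=i and b=k and c=j and d=l] by (metis (no_types))
  qed
qed

lemma EE_D1: "w \<in> EE e \<Longrightarrow> w$((a,b),(c,d)) = e * w$((b,a),(c,d))"
  unfolding EE_def by blast
lemma EE_D2: "w \<in> EE e \<Longrightarrow> w$((a,b),(c,d)) = e * w$((a,b),(d,c))"
  unfolding EE_def by blast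

lemma ws_PS: assumes "ws w" shows "PS w \<in> EE 1" "PA w \<in> EE (-1)"
proof -
  have f: "w$((a,b),(d,c)) = w$((b,a),(c,d))" "w$((b,a),(d,c)) = w$((a,b),(c,d))" for a b c d
    using assms unfolding ws_def by blast+
  show "PS w \<in> EE 1" unfolding EE_def
  proof (intro CollectI allI conjI)
    fix a b c d
    note f1 = f(1)[where a=a and b=b and c=c and d=d] and f2 = f(2)[where a=a and b=b and c=c and d=d]
    show "PS w $ ((a, b), c, d) = 1 * PS w $ ((b, a), c, d)" by (simp only: PS_comp) simp
    show "PS w $ ((a, b), c, d) = 1 * PS w $ ((a, b), d, c)" using f1 f2 by (simp add: PS_comp algebra_simps)
  qed
  show "PA w \<in> EE (-1)" unfolding EE_def
  proof (intro CollectI allI conjI)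
    fix a b c d
    note f1 = f(1)[where a=a and b=b and c=c and d=d] and f2 = f(2)[where a=a and b=b and c=c and d=d]
    show "PA w $ ((a, b), c, d) = -1 * PA w $ ((b, a), c, d)" by (simp only: PA_comp) (simp add: field_simps)
    show "PA w $ ((a, b), c, d) = -1 * PA w $ ((a, b), d, c)" using f1 f2 by (simp add: PA_comp field_simps)
  qed
qed

lemma PS_sum: assumes m: "m \<in> EE 1" and a: "a \<in> EE (-1)"
  shows "PS (m + a) = m" "PA (m + a) = a"
proof -
  have h: "m$((j,i),(k,l)) = m$((i,j),(k,l))" "a$((j,i),(k,l)) = - a$((i,j),(k,l))" for i j k l
    using EE_D1[OF m, of j i k l] EE_D1[OF a, of j i k l] by simp_all
  show "PS (m + a) = m" unfolding vec_eq_iff split_paired_All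
  proof (intro allI)
    fix i j k l
    show "PS (m + a) $ ((i, j), k, l) = m $ ((i, j), k, l)"
      by (simp only: PS_comp vector_add_component h(1)[of j i k l] h(2)[of j i k l]) simp
  qed
  show "PA (m + a) = a" unfolding vec_eq_iff split_paired_All
  proof (intro allI)
    fix i j k l
    show "PA (m + a) $ ((i, j), k, l) = a $ ((i, j), k, l)"
      by (simp only: PA_comp vector_add_component h(1)[of j i k l] h(2)[of j i k l]) simp
  qed
qed

lemma ws_sum: assumes m: "m \<in> EE 1" and a: "a \<in> EE (-1)" shows "ws (m + a)"
  unfolding ws_def
proof (intro allI)
  fix i j k l
  have "m$((i,j),(k,l)) = m$((j,i),(k,l))" "m$((j,i),(k,l)) = m$((j,i),(l,k))"
    "a$((i,j),(k,l)) = - a$((j,i),(k,l))" "a$((j,i),(k,l)) = - a$((j,i),(l,k))"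
    using EE_D1[OF m, of i j k l] EE_D2[OF m, of j i k l] EE_D1[OF a, of i j k l] EE_D2[OF a, of j i k l]
    by simp_all
  then show "(m + a)$((i,j),(k,l)) = (m + a)$((j,i),(l,k))" by simp
qed

lemma sig2_PS: assumes "ws w" "sig2 w = w" shows "sig2 (PS w) = PS w" "sig2 (PA w) = PA w"
proof -
  have h: "w$((a,b),(c,d)) = cnj (w$((c,d),(a,b)))" "w$((b,a),(c,d)) = cnj (w$((d,c),(a,b)))" for a b c d
  proof -
    have s: "sig2 w $ q = w $ q" for q using assms(2) by simp
    show "w$((a,b),(c,d)) = cnj (w$((c,d),(a,b)))" using s[of "((a,b),(c,d))"] by (simp add: sig2_comp)
    have eq: "w$((c,d),(b,a)) = w$((d,c),(a,b))" using assms(1) unfolding ws_def by blast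
    have s1: "cnj (w$((c,d),(b,a))) = w$((b,a),(c,d))" using s[of "((b,a),(c,d))"] by (simp only: sig2_comp)
    show "w$((b,a),(c,d)) = cnj (w$((d,c),(a,b)))" by (metis s1 eq)
  qed
  show "sig2 (PS w) = PS w" unfolding vec_eq_iff split_paired_All
  proof (intro allI)
    fix a b c d
    show "sig2 (PS w) $ ((a, b), c, d) = PS w $ ((a, b), c, d)"
      by (simp only: PS_comp sig2_comp h(1)[where a=a and b=b and c=c and d=d] h(2)[where a=a and b=b and c=c and d=d]) simp
  qed
  show "sig2 (PA w) = PA w" unfolding vec_eq_iff split_paired_All
  proof (intro allI)
    fix a b c d
    show "sig2 (PA w) $ ((a, b), c, d) = PA w $ ((a, b), c, d)"
      by (simp only: PA_comp sig2_comp h(1)[where a=a and b=b and c=c and d=d] h(2)[where a=a and b=b and c=c and d=d]) simp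
  qed
qed

lemma sig2_EE: assumes w: "w \<in> EE e" and e: "cnj e = e" shows "sig2 w \<in> EE e"
  unfolding EE_def
proof (intro CollectI allI conjI)
  fix a b c d
  have "w$((c,d),(a,b)) = e * w$((c,d),(b,a))" "w$((c,d),(a,b)) = e * w$((d,c),(a,b))"
    using EE_D2[OF w] EE_D1[OF w] by blast+
  then show "sig2 w $ ((a,b),(c,d)) = e * sig2 w $ ((b,a),(c,d))"
    "sig2 w $ ((a,b),(c,d)) = e * sig2 w $ ((a,b),(d,c))"
    by (simp_all add: sig2_comp e)
qed

lemma Mmat_PS: "Mmat U *v PS w = PS (Mmat U *v w)" "Mmat U *v PA w = PA (Mmat U *v w)"
  by (simp_all add: PS_def PA_def smult_mv matrix_vector_right_distrib matrix_vector_mult_diff_distrib K5)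



definition fmap :: "(complex^('n::finite \<times> 'n)) \<times> (complex^(('n \<times> 'n) \<times> ('n \<times> 'n))) \<Rightarrow> complex^('n bigidx)" where
  "fmap x = emb (T1 (fst x)) (PS (T2 (snd x))) (PA (T2 (snd x)))"

definition sigb :: "complex^('n::finite bigidx) \<Rightarrow> complex^('n bigidx)" where
  "sigb v = emb (sig1 (Lp v)) (sig2 (Mp v)) (sig2 (Rp v))"

lemma fmap_linear: "linear fmap"
  by (rule linearI) (simp_all add: fmap_def scaleR_vec_cx lin_add lin_smult emb_add emb_smult)

lemma fmap_inj: "inj (fmap :: (complex^('n::finite \<times> 'n)) \<times> (complex^(('n \<times> 'n) \<times> ('n \<times> 'n))) \<Rightarrow> _)"
proof (rule injI)
  fix x y :: "(complex^('n \<times> 'n)) \<times> (complex^(('n \<times> 'n) \<times> ('n \<times> 'n)))"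
  assume h: "fmap x = fmap y"
  have a: "T1 (fst x) = T1 (fst y)" using arg_cong[OF h, of Lp] by (simp add: fmap_def)
  have b: "PS (T2 (snd x)) = PS (T2 (snd y))" using arg_cong[OF h, of Mp] by (simp add: fmap_def)
  have c: "PA (T2 (snd x)) = PA (T2 (snd y))" using arg_cong[OF h, of Rp] by (simp add: fmap_def)
  have "T2 (snd x) = T2 (snd y)" using b c PS_PA by metis
  then have "snd x = snd y" using T2_T2 by metis
  moreover have "fst x = fst y" using a T1_T1 by metis
  ultimately show "x = y" by (simp add: prod_eq_iff)
qed

lemma sigb_sigb: "sigb (sigb v) = v"
  by (simp add: sigb_def sig1_sig1 sig2_sig2 emb_eta)
lemma sigb_add: "sigb (x + y) = sigb x + sigb y"
  by (simp add: sigb_def lin_add emb_add)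
lemma sigb_smult: "sigb (c *s x) = cnj c *s sigb x"
  by (simp add: sigb_def lin_smult emb_smult)

lemma Sset_subspace: "vec.subspace (Sset G r)"
  unfolding vec.subspace_def Sset_def
  by (auto simp: matrix_vector_right_distrib smult_mv
      intro: vec.subspace_add[OF EE_subspace] vec.subspace_scale[OF EE_subspace] vec.subspace_0[OF EE_subspace])

lemma Sset_sig: "v \<in> Sset G r \<Longrightarrow> sigb v \<in> Sset G r"
  unfolding Sset_def sigb_def
  by (auto simp: K3 K4 intro!: sig2_EE)

theorem theorem5:
  fixes G :: "('g, 'b) monoid_scheme"
    and r :: "'g \<Rightarrow> complex^'n^'n"
  assumes "group G"
    and "\<And>g. g \<in> carrier G \<Longrightarrow> unitary_mat (r g)"
    and "\<And>g h. g \<in> carrier G \<Longrightarrow> h \<in> carrier G \<Longrightarrow> r (g \<otimes>\<^bsub>G\<^esub> h) = r g ** r h"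
  shows "dim (invariant_potentials G r) =
    num_singlets G
      (dsum_rep (tensor_rep (conj_rep r) r)
        (dsum_rep (tensor_rep (tensor_rep r r) (tensor_rep (conj_rep r) (conj_rep r)))
                  (tensor_rep (tensor_rep r r) (tensor_rep (conj_rep r) (conj_rep r)))))
      (dsum_space UNIV
        (dsum_space (tensor_space sym_space sym_space) (tensor_space alt_space alt_space)))"
proof -
  let ?HP = "invariant_potentials G r"
  have memHP: "x \<in> ?HP \<longleftrightarrow> herm_mu (fst x) \<and> herm_z (snd x) \<and>
      (\<forall>g\<in>carrier G. act_mu (adj (r g)) (fst x) = fst x \<and> act_z (adj (r g)) (snd x) = snd x)" for x
    using forall_adj[OF assms, of "\<lambda>U. act_mu U (fst x) = fst x \<and> act_z U (snd x) = snd x"]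
    by (cases x) (simp add: invariant_potentials_def)
  define F where "F = {v \<in> Sset G r. sigb v = v}"
  have img: "fmap ` ?HP = F"
  proof (rule equalityI)
    show "fmap ` ?HP \<subseteq> F"
    proof
      fix v assume "v \<in> fmap ` ?HP"
      then obtain x where x: "x \<in> ?HP" and v: "v = fmap x" by blast
      obtain m z where xmz: "x = (m, z)" by (cases x)
      have hm: "herm_mu m" and hz: "herm_z z"
        and inv: "\<And>g. g \<in> carrier G \<Longrightarrow> act_mu (adj (r g)) m = m \<and> act_z (adj (r g)) z = z"
        using x unfolding memHP xmz by auto
      define w where "w = T2 z"
      have wsw: "ws w" and sw: "sig2 w = w" using hz unfolding herm_z_iff w_def by auto
      have s1: "sig1 (T1 m) = T1 m" using hm unfolding herm_mu_iff .
      have v': "v = emb (T1 m) (PS w) (PA w)" unfolding v xmz fmap_def w_def by simp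
      have A: "PS w \<in> EE 1" "PA w \<in> EE (-1)" using ws_PS[OF wsw] by auto
      have B: "\<forall>g\<in>carrier G. Amat (r g) *v T1 m = T1 m \<and> Mmat (r g) *v PS w = PS w \<and> Mmat (r g) *v PA w = PA w"
      proof
        fix g assume g: "g \<in> carrier G"
        show "Amat (r g) *v T1 m = T1 m \<and> Mmat (r g) *v PS w = PS w \<and> Mmat (r g) *v PA w = PA w"
          using inv[OF g] by (simp add: K1 Mmat_PS w_def K2)
      qed
      have "v \<in> Sset G r" unfolding v' using A B by (simp add: Sset_def)
      moreover have "sigb v = v"
        unfolding v' sigb_def emb_proj using s1 sig2_PS[OF wsw sw] by simp
      ultimately show "v \<in> F" unfolding F_def by blast
    qed
  next
    show "F \<subseteq> fmap ` ?HP"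
    proof
      fix v assume "v \<in> F"
      then have vS: "v \<in> Sset G r" and sv: "sigb v = v" unfolding F_def by auto
      have mE: "Mp v \<in> EE 1" and aE: "Rp v \<in> EE (-1)"
        and invv: "\<And>g. g \<in> carrier G \<Longrightarrow> Amat (r g) *v Lp v = Lp v \<and> Mmat (r g) *v Mp v = Mp v \<and> Mmat (r g) *v Rp v = Rp v"
        using vS unfolding Sset_def by auto
      have sL: "sig1 (Lp v) = Lp v" using arg_cong[OF sv, of Lp] by (simp add: sigb_def)
      have sM: "sig2 (Mp v) = Mp v" using arg_cong[OF sv, of Mp] by (simp add: sigb_def)
      have sR: "sig2 (Rp v) = Rp v" using arg_cong[OF sv, of Rp] by (simp add: sigb_def)
      define m where "m = T1 (Lp v)"
      define z where "z = T2 (Mp v + Rp v)"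
      have Tm: "T1 m = Lp v" unfolding m_def by (simp add: T1_T1)
      have Tz: "T2 z = Mp v + Rp v" unfolding z_def by (simp add: T2_T2)
      have fv: "fmap (m, z) = v"
        unfolding fmap_def by (simp add: Tm Tz PS_sum[OF mE aE] emb_eta)
      have hm: "herm_mu m" unfolding herm_mu_iff Tm by (rule sL)
      have hz: "herm_z z" unfolding herm_z_iff Tz using ws_sum[OF mE aE] sM sR by (simp add: lin_add)
      have ig: "act_mu (adj (r g)) m = m \<and> act_z (adj (r g)) z = z" if g: "g \<in> carrier G" for g
      proof
        have "T1 (act_mu (adj (r g)) m) = T1 m" using invv[OF g] by (simp add: K1[symmetric] Tm)
        then show "act_mu (adj (r g)) m = m" by (metis T1_T1)
        have "T2 (act_z (adj (r g)) z) = T2 z" using invv[OF g]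
          by (simp add: K2[symmetric] Tz matrix_vector_right_distrib)
        then show "act_z (adj (r g)) z = z" by (metis T2_T2)
      qed
      have "(m, z) \<in> ?HP" unfolding memHP fst_conv snd_conv using hm hz ig by blast
      then show "v \<in> fmap ` ?HP" using fv by (metis image_eqI)
    qed
  qed
  have "dim ?HP = dim (fmap ` ?HP)"
    by (rule dim_image_eq[symmetric, OF fmap_linear inj_on_subset[OF fmap_inj subset_UNIV]])
  also have "\<dots> = vec.dim (Sset G r)"
    unfolding img F_def
    by (rule real_form_dim[OF Sset_subspace Sset_sig sigb_sigb sigb_add sigb_smult])
  also have "\<dots> = num_singlets G
      (dsum_rep (tensor_rep (conj_rep r) r)
        (dsum_rep (tensor_rep (tensor_rep r r) (tensor_rep (conj_rep r) (conj_rep r)))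
                  (tensor_rep (tensor_rep r r) (tensor_rep (conj_rep r) (conj_rep r)))))
      (dsum_space UNIV
        (dsum_space (tensor_space sym_space sym_space) (tensor_space alt_space alt_space)))"
    unfolding num_singlets_def S_char ..
  finally show ?thesis .
qed


end
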